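(* Every affine equivariant integrator map $\phi$ is closed under differentiation: for every Banach space $Y$ and every $f\in\mathfrak{X}(Y)$, $\phi(\delta f)=\delta\phi(f)$.
   Context: All spaces are real Banach spaces; $\mathfrak{X}(Y)$ denotes the smooth vector fields on $Y$. An integrator map $\phi$ is a collection of smooth maps $\phi_Y\colon\mathfrak{X}(Y)\to\mathfrak{X}(Y)$, one for each Banach space $Y$. For Gâteaux differentiable $\chi\colon Y\to U$, $f\sim_\chi g$ means $\chi'(y)f(y)=g(\chi(y))$ for all $y$. $\phi$ is affine equivariant if for every affine $A\colon Y\to U$ between Banach spaces, $f\sim_A g$ implies $\phi(f)\sim_A\phi(g)$. For $f\in\mathfrak X(Y)$, the tangent lift $\delta f\in\mathfrak X(Y\times Y)$ is $\delta f(y,\eta)=(f(y),f'(y)\eta)$. *)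

theory Defs
  imports "HOL-Analysis.Analysis"
begin

definition gderiv :: "('a::real_normed_vector \<Rightarrow> 'b::real_normed_vector) \<Rightarrow> 'a \<Rightarrow> 'a \<Rightarrow> 'b" where
  "gderiv f y v = Lim (at 0) (\<lambda>t::real. (f (y + t *\<^sub>R v) - f y) /\<^sub>R t)"

fun iter_dd :: "('a::real_normed_vector \<Rightarrow> 'b::real_normed_vector) \<Rightarrow> 'a list \<Rightarrow> 'a \<Rightarrow> 'b" where
  "iter_dd f [] = f"
| "iter_dd f (v # vs) = (\<lambda>x. gderiv (iter_dd f vs) x v)"

text \<open>Smoothness (C^infinity in the sense of Keller/Bastiani, which for maps between
  Banach spaces coincides with Frechet C^infinity): all iterated directional
  derivatives exist, and each d^n f is (sequentially, hence) continuous as a map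
  on the product of the domain with n copies of it.\<close>
definition smooth :: "('a::real_normed_vector \<Rightarrow> 'b::real_normed_vector) \<Rightarrow> bool" where
  "smooth f \<longleftrightarrow>
     (\<forall>vs v x. ((\<lambda>t::real. (iter_dd f vs (x + t *\<^sub>R v) - iter_dd f vs x) /\<^sub>R t)
                  \<longlongrightarrow> iter_dd f (v # vs) x) (at 0)) \<and>
     (\<forall>vs x (xs :: nat \<Rightarrow> 'a) (vss :: nat \<Rightarrow> 'a list).
        (\<forall>k. length (vss k) = length vs) \<longrightarrow> xs \<longlonglongrightarrow> x \<longrightarrow>
        (\<forall>i < length vs. (\<lambda>k. vss k ! i) \<longlonglongrightarrow> vs ! i) \<longrightarrow>
        (\<lambda>k. iter_dd f (vss k) (xs k)) \<longlonglongrightarrow> iter_dd f vs x)"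

definition vector_fields :: "('a::real_normed_vector \<Rightarrow> 'a) set" where
  "vector_fields = {f. smooth f}"

definition related :: "('a::real_normed_vector \<Rightarrow> 'b::real_normed_vector) \<Rightarrow> ('a \<Rightarrow> 'a) \<Rightarrow> ('b \<Rightarrow> 'b) \<Rightarrow> bool" where
  "related chi f g \<longleftrightarrow>
     (\<forall>y. ((\<lambda>t::real. (chi (y + t *\<^sub>R f y) - chi y) /\<^sub>R t) \<longlongrightarrow> g (chi y)) (at 0))"

definition affine_map :: "('a::real_normed_vector \<Rightarrow> 'b::real_normed_vector) \<Rightarrow> bool" where
  "affine_map A \<longleftrightarrow> (\<exists>L b. bounded_linear L \<and> A = (\<lambda>y. L y + b))"

text \<open>phi_Y : X(Y) -> X(Y) is a smooth map (convenient calculus: maps smooth curves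
  to smooth curves; a curve c : R -> X(Y) is smooth iff (t,y) |-> c t y is smooth).\<close>
definition integrator_component :: "(('a::real_normed_vector \<Rightarrow> 'a) \<Rightarrow> ('a \<Rightarrow> 'a)) \<Rightarrow> bool" where
  "integrator_component phi \<longleftrightarrow>
     (\<forall>f \<in> vector_fields. phi f \<in> vector_fields) \<and>
     (\<forall>c :: real \<Rightarrow> 'a \<Rightarrow> 'a. smooth (\<lambda>p. c (fst p) (snd p)) \<longrightarrow>
        smooth (\<lambda>p. phi (c (fst p)) (snd p)))"

definition affine_equivariant_pair ::
  "(('a::real_normed_vector \<Rightarrow> 'a) \<Rightarrow> ('a \<Rightarrow> 'a)) \<Rightarrow> (('b::real_normed_vector \<Rightarrow> 'b) \<Rightarrow> ('b \<Rightarrow> 'b)) \<Rightarrow> bool" where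
  "affine_equivariant_pair phi psi \<longleftrightarrow>
     (\<forall>(A :: 'a \<Rightarrow> 'b) f g. affine_map A \<longrightarrow> f \<in> vector_fields \<longrightarrow> g \<in> vector_fields \<longrightarrow>
        related A f g \<longrightarrow> related A (phi f) (psi g))"

definition tangent_lift :: "('a::real_normed_vector \<Rightarrow> 'a) \<Rightarrow> ('a \<times> 'a \<Rightarrow> 'a \<times> 'a)" where
  "tangent_lift f = (\<lambda>(y, eta). (f y, gderiv f y eta))"

end

theory Submission
  imports Defs
begin

lemma iter_dd_append: "iter_dd f (ws @ vs) = iter_dd (iter_dd f vs) ws"
  by (induction ws) auto

lemma smooth_S1: "smooth f \<Longrightarrow> ((\<lambda>t::real. (iter_dd f vs (x + t *\<^sub>R v) - iter_dd f vs x) /\<^sub>R t) \<longlongrightarrow> iter_dd f (v # vs) x) (at 0)"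
  unfolding smooth_def by blast

lemma smooth_S2: "smooth f \<Longrightarrow> (\<forall>k. length (vss k) = length vs) \<Longrightarrow> xs \<longlonglongrightarrow> x \<Longrightarrow>
   (\<forall>i<length vs. (\<lambda>k. vss k ! i) \<longlonglongrightarrow> vs ! i) \<Longrightarrow> (\<lambda>k. iter_dd f (vss k) (xs k)) \<longlonglongrightarrow> iter_dd f vs x"
  unfolding smooth_def by blast

lemma smooth_cont: "smooth f \<Longrightarrow> xs \<longlonglongrightarrow> x \<Longrightarrow> (\<lambda>k. iter_dd f vs (xs k)) \<longlonglongrightarrow> iter_dd f vs x"
  using smooth_S2[of f "\<lambda>k. vs" vs xs x] by auto

lemma smooth_isCont: "smooth f \<Longrightarrow> isCont (iter_dd f vs) x"
  by (rule continuous_at_sequentiallyI) (auto dest: smooth_cont simp: o_def)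

lemma smooth_iter_dd:
  assumes "smooth f" shows "smooth (iter_dd f vs)"
  unfolding smooth_def iter_dd_append[symmetric]
proof (intro conjI allI impI)
  fix ws v x
  show "((\<lambda>t::real. (iter_dd f (ws @ vs) (x + t *\<^sub>R v) - iter_dd f (ws @ vs) x) /\<^sub>R t) \<longlongrightarrow> iter_dd f ((v # ws) @ vs) x) (at 0)"
    using smooth_S1[OF assms] by simp
next
  fix ws x and xs :: "nat \<Rightarrow> 'a" and vss :: "nat \<Rightarrow> 'a list"
  assume l: "\<forall>k. length (vss k) = length ws" and x: "xs \<longlonglongrightarrow> x"
    and c: "\<forall>i<length ws. (\<lambda>k. vss k ! i) \<longlonglongrightarrow> ws ! i"
  have "\<forall>i<length (ws @ vs). (\<lambda>k. (vss k @ vs) ! i) \<longlonglongrightarrow> (ws @ vs) ! i"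
  proof (intro allI impI)
    fix i assume "i < length (ws @ vs)"
    show "(\<lambda>k. (vss k @ vs) ! i) \<longlonglongrightarrow> (ws @ vs) ! i"
    proof (cases "i < length ws")
      case True then show ?thesis using c l by (simp add: nth_append)
    next
      case False then show ?thesis using l by (simp add: nth_append)
    qed
  qed
  then show "(\<lambda>k. iter_dd f (vss k @ vs) (xs k)) \<longlonglongrightarrow> iter_dd f (ws @ vs) x"
    using smooth_S2[OF assms, of "\<lambda>k. vss k @ vs" "ws @ vs" xs x] l x by simp
qed

lemma gderiv_eq: "((\<lambda>t::real. (g (x + t *\<^sub>R v) - g x) /\<^sub>R t) \<longlongrightarrow> D) (at 0) \<Longrightarrow> gderiv g x v = D"
  unfolding gderiv_def by (rule tendsto_Lim) auto

lemma gderiv_zero: "gderiv g x 0 = 0"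
  by (rule gderiv_eq) simp

lemma iter_dd_zero_fun: "iter_dd (\<lambda>x. 0) ws = (\<lambda>x. 0)"
  by (induction ws) (auto simp: gderiv_eq)

lemma iter_dd_zero_slot:
  assumes "j < length ws" shows "iter_dd f (ws[j := 0]) = (\<lambda>x. 0)"
proof -
  have "ws[j := 0] = take j ws @ (0 # drop (Suc j) ws)"
    using assms by (simp add: upd_conv_take_nth_drop)
  then show ?thesis
    by (simp add: iter_dd_append gderiv_zero iter_dd_zero_fun)
qed

lemma vd_from_quot:
  fixes f :: "real \<Rightarrow> 'b::real_normed_vector"
  assumes "((\<lambda>\<tau>. (f (\<sigma> + \<tau>) - f \<sigma>) /\<^sub>R \<tau>) \<longlongrightarrow> D) (at 0)"
  shows "(f has_vector_derivative D) (at \<sigma>)"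
  unfolding has_vector_derivative_def has_derivative_at
proof (intro conjI)
  show "bounded_linear (\<lambda>x. x *\<^sub>R D)" by (rule bounded_linear_scaleR_left)
  have "((\<lambda>h. norm ((f (\<sigma>+h) - f \<sigma>) /\<^sub>R h - D)) \<longlongrightarrow> 0) (at 0)"
    using tendsto_norm_zero[OF LIM_zero[OF assms]] .
  moreover have "\<forall>\<^sub>F h in at 0. norm ((f (\<sigma>+h) - f \<sigma>) /\<^sub>R h - D) = norm (f (\<sigma> + h) - f \<sigma> - h *\<^sub>R D) / norm h"
  proof (rule eventually_at_topological[THEN iffD2], intro exI[of _ UNIV] conjI ballI impI, simp, simp)
    fix h :: real assume "h \<noteq> 0"
    then have "(f (\<sigma>+h) - f \<sigma>) /\<^sub>R h - D = (1/h) *\<^sub>R (f (\<sigma> + h) - f \<sigma> - h *\<^sub>R D)"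
      by (simp add: scaleR_diff_right inverse_eq_divide)
    then show "norm ((f (\<sigma>+h) - f \<sigma>) /\<^sub>R h - D) = norm (f (\<sigma> + h) - f \<sigma> - h *\<^sub>R D) / norm h"
      by (simp add: divide_inverse)
  qed
  ultimately show "((\<lambda>h. norm (f (\<sigma> + h) - f \<sigma> - h *\<^sub>R D) / norm h) \<longlongrightarrow> 0) (at 0)"
    by (rule tendsto_cong[THEN iffD1, rotated])
qed

lemma mv_line:
  fixes F :: "'a::real_normed_vector \<Rightarrow> 'b::real_normed_vector"
  assumes D: "\<And>\<sigma>. ((\<lambda>\<tau>. (F (p + (\<sigma> + \<tau>) *\<^sub>R w) - F (p + \<sigma> *\<^sub>R w)) /\<^sub>R \<tau>) \<longlongrightarrow> DF \<sigma>) (at 0)"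
    and B: "\<And>\<sigma>. \<sigma> \<in> closed_segment 0 t \<Longrightarrow> norm (DF \<sigma> - C) \<le> B"
  shows "norm (F (p + t *\<^sub>R w) - F p - t *\<^sub>R C) \<le> B * \<bar>t\<bar>"
proof -
  let ?g = "\<lambda>\<sigma>. F (p + \<sigma> *\<^sub>R w) - \<sigma> *\<^sub>R C"
  have vd: "((\<lambda>\<sigma>. F (p + \<sigma> *\<^sub>R w)) has_vector_derivative DF \<sigma>) (at \<sigma>)" for \<sigma>
    by (rule vd_from_quot) (use D in simp)
  have vd2: "(?g has_vector_derivative (DF \<sigma> - C)) (at \<sigma>)" for \<sigma>
  proof -
    have "((\<lambda>\<sigma>. \<sigma> *\<^sub>R C) has_vector_derivative C) (at \<sigma>)"
      by (auto simp: has_vector_derivative_def intro!: derivative_eq_intros)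
    then show ?thesis using has_vector_derivative_diff[OF vd] by blast
  qed
  have "norm (?g t - ?g 0) \<le> B * norm (t - 0)"
  proof (rule differentiable_bound[of "closed_segment 0 t" ?g "\<lambda>\<sigma> h. h *\<^sub>R (DF \<sigma> - C)"])
    show "convex (closed_segment 0 t)" by simp
    show "(?g has_derivative (\<lambda>h. h *\<^sub>R (DF \<sigma> - C))) (at \<sigma> within closed_segment 0 t)" for \<sigma>
      using vd2[of \<sigma>] unfolding has_vector_derivative_def by (rule has_derivative_at_withinI)
    show "onorm (\<lambda>h. h *\<^sub>R (DF \<sigma> - C)) \<le> B" if "\<sigma> \<in> closed_segment 0 t" for \<sigma>
    proof (intro onorm_le)
      fix h :: real
      show "norm (h *\<^sub>R (DF \<sigma> - C)) \<le> B * norm h"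
        using mult_right_mono[OF B[OF that] abs_ge_zero[of h]] by (simp add: mult.commute)
    qed
  qed auto
  then show ?thesis by (simp add: algebra_simps)
qed

lemma smooth_S1_0: "smooth g \<Longrightarrow> ((\<lambda>t::real. (g (x + t *\<^sub>R v) - g x) /\<^sub>R t) \<longlongrightarrow> gderiv g x v) (at 0)"
  using smooth_S1[of g "[]" x v] by simp

lemma filterlim_mult_const_at0:
  assumes "(r::real) \<noteq> 0" shows "filterlim (\<lambda>t. t * r) (at 0) (at 0)"
  unfolding filterlim_at
proof
  show "\<forall>\<^sub>F t in at 0. t * r \<in> UNIV \<and> t * r \<noteq> 0"
    using assms by (auto simp: eventually_at_filter)
  show "((\<lambda>t. t * r) \<longlongrightarrow> 0) (at 0)"
  proof -
    have "((\<lambda>t::real. t * r) \<longlongrightarrow> 0 * r) (at 0)" by (intro tendsto_intros)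
    then show ?thesis by simp
  qed
qed

lemma gderiv_scale:
  assumes "smooth g" shows "gderiv g x (r *\<^sub>R u) = r *\<^sub>R gderiv g x u"
proof (cases "r = 0")
  case True then show ?thesis by (simp add: gderiv_zero)
next
  case False
  let ?q = "\<lambda>t::real. (g (x + t *\<^sub>R u) - g x) /\<^sub>R t"
  have "((\<lambda>t. ?q (t * r)) \<longlongrightarrow> gderiv g x u) (at 0)"
    by (rule filterlim_compose[OF smooth_S1_0[OF assms] filterlim_mult_const_at0[OF False]])
  then have "((\<lambda>t. r *\<^sub>R ?q (t * r)) \<longlongrightarrow> r *\<^sub>R gderiv g x u) (at 0)"
    by (intro tendsto_scaleR tendsto_const)
  moreover have "\<forall>\<^sub>F t in at 0. r *\<^sub>R ?q (t * r) = (g (x + t *\<^sub>R (r *\<^sub>R u)) - g x) /\<^sub>R t"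
    using False by (auto simp: eventually_at_filter)
  ultimately show ?thesis
    by (intro gderiv_eq) (rule tendsto_cong[THEN iffD1, rotated])
qed

lemma gderiv_add:
  assumes g: "smooth g" shows "gderiv g x (u + w) = gderiv g x u + gderiv g x w"
proof (rule gderiv_eq)
  let ?Dw = "gderiv g x w"
  let ?r = "\<lambda>t::real. (g (x + t *\<^sub>R u + t *\<^sub>R w) - g (x + t *\<^sub>R u)) /\<^sub>R t"
  have r: "?r \<midarrow>0\<rightarrow> ?Dw"
  proof (rule LIM_I)
    fix e :: real assume e: "0 < e"
    have "isCont (iter_dd g [w]) x" by (rule smooth_isCont[OF g])
    then obtain d where d: "d > 0" and dd: "\<And>y. y \<noteq> x \<and> norm (y - x) < d \<Longrightarrow> norm (iter_dd g [w] y - iter_dd g [w] x) < e/2"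
      unfolding isCont_def using LIM_D[of "iter_dd g [w]" "iter_dd g [w] x" x "e/2"] e by auto
    have dd': "norm (gderiv g y w - ?Dw) < e/2" if "norm (y - x) < d" for y
      using dd[of y] that e by (cases "y = x") auto
    define s where "s = d / (norm u + norm w + 1)"
    have pos: "norm u + norm w + 1 > 0" by (intro add_nonneg_pos) auto
    have s: "s > 0" using d pos by (simp add: s_def)
    show "\<exists>s>0. \<forall>t. t \<noteq> 0 \<and> norm (t - 0) < s \<longrightarrow> norm (?r t - ?Dw) < e"
    proof (intro exI[of _ s] conjI allI impI s)
      fix t :: real assume t: "t \<noteq> 0 \<and> norm (t - 0) < s"
      have mv: "norm (g (x + t *\<^sub>R u + t *\<^sub>R w) - g (x + t *\<^sub>R u) - t *\<^sub>R ?Dw) \<le> e/2 * \<bar>t\<bar>"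
      proof (rule mv_line[where DF = "\<lambda>\<sigma>. gderiv g (x + t *\<^sub>R u + \<sigma> *\<^sub>R w) w"])
        show "((\<lambda>\<tau>. (g (x + t *\<^sub>R u + (\<sigma> + \<tau>) *\<^sub>R w) - g (x + t *\<^sub>R u + \<sigma> *\<^sub>R w)) /\<^sub>R \<tau>) \<longlongrightarrow> gderiv g (x + t *\<^sub>R u + \<sigma> *\<^sub>R w) w) (at 0)" for \<sigma>
          using smooth_S1_0[OF g, of "x + t *\<^sub>R u + \<sigma> *\<^sub>R w" w] by (simp add: scaleR_add_left add.assoc)
        fix \<sigma> assume \<sigma>: "\<sigma> \<in> closed_segment 0 t"
        then have "\<bar>\<sigma>\<bar> \<le> \<bar>t\<bar>" by (auto simp: closed_segment_eq_real_ivl split: if_splits)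
        have "norm (x + t *\<^sub>R u + \<sigma> *\<^sub>R w - x) \<le> \<bar>t\<bar> * norm u + \<bar>\<sigma>\<bar> * norm w"
          using norm_triangle_ineq[of "t *\<^sub>R u" "\<sigma> *\<^sub>R w"] by simp
        also have "\<dots> \<le> \<bar>t\<bar> * (norm u + norm w + 1)"
          using mult_right_mono[OF \<open>\<bar>\<sigma>\<bar> \<le> \<bar>t\<bar>\<close> norm_ge_zero[of w]] by (simp add: algebra_simps)
        also have "\<dots> < s * (norm u + norm w + 1)"
          using t pos by (intro mult_strict_right_mono) auto
        also have "\<dots> = d" using pos by (simp add: s_def)
        finally show "norm (gderiv g (x + t *\<^sub>R u + \<sigma> *\<^sub>R w) w - ?Dw) \<le> e/2"
          using dd' by (simp add: less_imp_le)
      qed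
      have "?r t - ?Dw = (1/t) *\<^sub>R (g (x + t *\<^sub>R u + t *\<^sub>R w) - g (x + t *\<^sub>R u) - t *\<^sub>R ?Dw)"
        using t by (simp add: scaleR_diff_right inverse_eq_divide)
      then have "norm (?r t - ?Dw) = norm (g (x + t *\<^sub>R u + t *\<^sub>R w) - g (x + t *\<^sub>R u) - t *\<^sub>R ?Dw) / \<bar>t\<bar>"
        by (simp add: divide_inverse mult.commute)
      also have "\<dots> \<le> (e/2 * \<bar>t\<bar>) / \<bar>t\<bar>"
        using mv by (intro divide_right_mono) auto
      also have "\<dots> < e" using t e by simp
      finally show "norm (?r t - ?Dw) < e" .
    qed
  qed
  have "((\<lambda>t. ?r t + (g (x + t *\<^sub>R u) - g x) /\<^sub>R t) \<longlongrightarrow> ?Dw + gderiv g x u) (at 0)"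
    by (intro tendsto_add r smooth_S1_0[OF g])
  moreover have "\<forall>\<^sub>F t in at 0. ?r t + (g (x + t *\<^sub>R u) - g x) /\<^sub>R t = (g (x + t *\<^sub>R (u + w)) - g x) /\<^sub>R t"
    by (auto simp: eventually_at_filter scaleR_add_right add.assoc algebra_simps)
  ultimately show "((\<lambda>t. (g (x + t *\<^sub>R (u + w)) - g x) /\<^sub>R t) \<longlongrightarrow> gderiv g x u + gderiv g x w) (at 0)"
    by (simp add: add.commute) (rule tendsto_cong[THEN iffD1, rotated])
qed

lemma iter_dd_lin:
  assumes F: "smooth F" and G: "smooth G"
  shows "iter_dd (\<lambda>x. F x + r *\<^sub>R G x) ws = (\<lambda>x. iter_dd F ws x + r *\<^sub>R iter_dd G ws x)"
proof (induction ws)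
  case Nil then show ?case by simp
next
  case (Cons w ws)
  show ?case
  proof
    fix x
    have "((\<lambda>t. (iter_dd F ws (x + t *\<^sub>R w) - iter_dd F ws x) /\<^sub>R t + r *\<^sub>R ((iter_dd G ws (x + t *\<^sub>R w) - iter_dd G ws x) /\<^sub>R t))
       \<longlongrightarrow> iter_dd F (w # ws) x + r *\<^sub>R iter_dd G (w # ws) x) (at 0)"
      by (intro tendsto_intros smooth_S1[OF F] smooth_S1[OF G])
    then have "gderiv (\<lambda>x. iter_dd F ws x + r *\<^sub>R iter_dd G ws x) x w = iter_dd F (w # ws) x + r *\<^sub>R iter_dd G (w # ws) x"
      by (intro gderiv_eq) (simp add: algebra_simps)
    then show "iter_dd (\<lambda>x. F x + r *\<^sub>R G x) (w # ws) x = iter_dd F (w # ws) x + r *\<^sub>R iter_dd G (w # ws) x"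
      using Cons by simp
  qed
qed

lemma iter_dd_slot_lin:
  assumes "smooth f"
  shows "iter_dd f ((a + r *\<^sub>R b) # P) x = iter_dd f (a # P) x + r *\<^sub>R iter_dd f (b # P) x"
  using gderiv_add[OF smooth_iter_dd[OF assms, of P]] gderiv_scale[OF smooth_iter_dd[OF assms, of P]]
  by simp

lemma iter_dd_single_lin:
  assumes "smooth f"
  shows "iter_dd f [p + r *\<^sub>R q] = (\<lambda>x. iter_dd f [p] x + r *\<^sub>R iter_dd f [q] x)"
  using iter_dd_slot_lin[OF assms, of p r q "[]"] by auto

lemma base_quad:
  assumes g: "smooth g"
  shows "((\<lambda>t::real. (g (z0 + t *\<^sub>R v + (t*t) *\<^sub>R w) - g z0) /\<^sub>R t) \<longlongrightarrow> gderiv g z0 v) (at 0)"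
proof -
  let ?r = "\<lambda>t::real. (g (z0 + t *\<^sub>R v + (t*t) *\<^sub>R w) - g (z0 + t *\<^sub>R v)) /\<^sub>R t"
  have r: "?r \<midarrow>0\<rightarrow> 0"
  proof (rule LIM_I)
    fix e :: real assume e: "0 < e"
    have "isCont (iter_dd g [w]) z0" by (rule smooth_isCont[OF g])
    then obtain d where d: "d > 0" and dd: "\<And>y. y \<noteq> z0 \<and> norm (y - z0) < d \<Longrightarrow> norm (iter_dd g [w] y - iter_dd g [w] z0) < 1"
      unfolding isCont_def using LIM_D[of "iter_dd g [w]" "iter_dd g [w] z0" z0 1] by auto
    define M where "M = norm (gderiv g z0 w) + 1"
    have M: "M > 0" by (simp add: M_def add_nonneg_pos)
    have dd': "norm (gderiv g y w) \<le> M" if "norm (y - z0) < d" for y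
    proof -
      have "norm (gderiv g y w - gderiv g z0 w) < 1"
        using dd[of y] that by (cases "y = z0") auto
      then show ?thesis unfolding M_def using norm_triangle_ineq2[of "gderiv g y w" "gderiv g z0 w"] by simp
    qed
    have pos: "norm v + norm w + 1 > 0" by (intro add_nonneg_pos) auto
    define s where "s = min 1 (min (d / (norm v + norm w + 1)) (e / M))"
    have s: "s > 0" using d pos M e by (simp add: s_def)
    show "\<exists>s>0. \<forall>t. t \<noteq> 0 \<and> norm (t - 0) < s \<longrightarrow> norm (?r t - 0) < e"
    proof (intro exI[of _ s] conjI allI impI s)
      fix t :: real assume t: "t \<noteq> 0 \<and> norm (t - 0) < s"
      then have t1: "\<bar>t\<bar> < 1" and t2: "\<bar>t\<bar> < d / (norm v + norm w + 1)" and t3: "\<bar>t\<bar> < e / M"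
        by (auto simp: s_def)
      have "\<bar>t\<bar>*\<bar>t\<bar> \<le> \<bar>t\<bar> * 1" by (rule mult_left_mono) (use t1 in auto)
      then have tt: "\<bar>t*t\<bar> \<le> \<bar>t\<bar>" by (simp add: abs_mult)
      have mv: "norm (g (z0 + t *\<^sub>R v + (t*t) *\<^sub>R w) - g (z0 + t *\<^sub>R v) - (t*t) *\<^sub>R 0) \<le> M * \<bar>t*t\<bar>"
      proof (rule mv_line[where DF = "\<lambda>\<sigma>. gderiv g (z0 + t *\<^sub>R v + \<sigma> *\<^sub>R w) w"])
        show "((\<lambda>\<tau>. (g (z0 + t *\<^sub>R v + (\<sigma> + \<tau>) *\<^sub>R w) - g (z0 + t *\<^sub>R v + \<sigma> *\<^sub>R w)) /\<^sub>R \<tau>) \<longlongrightarrow> gderiv g (z0 + t *\<^sub>R v + \<sigma> *\<^sub>R w) w) (at 0)" for \<sigma>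
          using smooth_S1_0[OF g, of "z0 + t *\<^sub>R v + \<sigma> *\<^sub>R w" w] by (simp add: scaleR_add_left add.assoc)
        fix \<sigma> assume \<sigma>: "\<sigma> \<in> closed_segment 0 (t*t)"
        then have "\<bar>\<sigma>\<bar> \<le> \<bar>t*t\<bar>" by (auto simp: closed_segment_eq_real_ivl split: if_splits)
        then have s1: "\<bar>\<sigma>\<bar> \<le> \<bar>t\<bar>" using tt by linarith
        have "norm (z0 + t *\<^sub>R v + \<sigma> *\<^sub>R w - z0) \<le> \<bar>t\<bar> * norm v + \<bar>\<sigma>\<bar> * norm w"
          using norm_triangle_ineq[of "t *\<^sub>R v" "\<sigma> *\<^sub>R w"] by simp
        also have "\<dots> \<le> \<bar>t\<bar> * (norm v + norm w + 1)"
          using mult_right_mono[OF s1 norm_ge_zero[of w]] by (simp add: algebra_simps)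
        also have "\<dots> < d"
          using t2 pos by (simp add: pos_less_divide_eq)
        finally show "norm (gderiv g (z0 + t *\<^sub>R v + \<sigma> *\<^sub>R w) w - 0) \<le> M"
          using dd' by simp
      qed
      have "?r t = (1/t) *\<^sub>R (g (z0 + t *\<^sub>R v + (t*t) *\<^sub>R w) - g (z0 + t *\<^sub>R v))"
        by (simp add: inverse_eq_divide)
      then have "norm (?r t - 0) = norm (g (z0 + t *\<^sub>R v + (t*t) *\<^sub>R w) - g (z0 + t *\<^sub>R v)) / \<bar>t\<bar>"
        by (simp add: divide_inverse mult.commute)
      also have "\<dots> \<le> (M * \<bar>t*t\<bar>) / \<bar>t\<bar>"
        using mv by (intro divide_right_mono) auto
      also have "\<dots> = M * \<bar>t\<bar>" using t by (simp add: abs_mult field_simps)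
      also have "\<dots> < e" using t3 M by (simp add: pos_less_divide_eq mult.commute)
      finally show "norm (?r t - 0) < e" .
    qed
  qed
  have "((\<lambda>t. ?r t + (g (z0 + t *\<^sub>R v) - g z0) /\<^sub>R t) \<longlongrightarrow> 0 + gderiv g z0 v) (at 0)"
    by (intro tendsto_add r smooth_S1_0[OF g])
  moreover have "\<forall>\<^sub>F t in at 0. ?r t + (g (z0 + t *\<^sub>R v) - g z0) /\<^sub>R t = (g (z0 + t *\<^sub>R v + (t*t) *\<^sub>R w) - g z0) /\<^sub>R t"
    by (auto simp: eventually_at_filter algebra_simps)
  ultimately show ?thesis
    by simp (rule tendsto_cong[THEN iffD1, rotated])
qed

lemma cont_slots:
  assumes g: "smooth g"
  shows "((\<lambda>t::real. iter_dd g (map (\<lambda>(p,q). p + t *\<^sub>R q) PQ) (z0 + t *\<^sub>R v + (t*t) *\<^sub>R w))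
          \<longlongrightarrow> iter_dd g (map fst PQ) z0) (at 0)"
proof (subst tendsto_at_iff_sequentially, intro allI impI)
  fix X :: "nat \<Rightarrow> real" assume "\<forall>i. X i \<in> UNIV - {0}" and X: "X \<longlonglongrightarrow> 0"
  have z: "(\<lambda>k. z0 + X k *\<^sub>R v + (X k * X k) *\<^sub>R w) \<longlonglongrightarrow> z0 + 0 *\<^sub>R v + (0 * 0) *\<^sub>R w"
    by (intro tendsto_intros X)
  have "(\<lambda>k. iter_dd g (map (\<lambda>(p,q). p + X k *\<^sub>R q) PQ) (z0 + X k *\<^sub>R v + (X k * X k) *\<^sub>R w)) \<longlonglongrightarrow> iter_dd g (map fst PQ) z0"
  proof (rule smooth_S2[OF g])
    show "\<forall>i<length (map fst PQ). (\<lambda>k. map (\<lambda>(p,q). p + X k *\<^sub>R q) PQ ! i) \<longlonglongrightarrow> map fst PQ ! i"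
    proof (intro allI impI)
      fix i assume i: "i < length (map fst PQ)"
      have "(\<lambda>k. fst (PQ ! i) + X k *\<^sub>R snd (PQ ! i)) \<longlonglongrightarrow> fst (PQ ! i) + 0 *\<^sub>R snd (PQ ! i)"
        by (intro tendsto_intros X)
      then show "(\<lambda>k. map (\<lambda>(p,q). p + X k *\<^sub>R q) PQ ! i) \<longlonglongrightarrow> map fst PQ ! i"
        using i by (simp add: case_prod_beta)
    qed
  qed (use z in auto)
  then show "((\<lambda>t. iter_dd g (map (\<lambda>(p,q). p + t *\<^sub>R q) PQ) (z0 + t *\<^sub>R v + (t*t) *\<^sub>R w)) \<circ> X) \<longlonglongrightarrow> iter_dd g (map fst PQ) z0"
    by (simp add: o_def)
qed

lemma lemM:
  assumes "smooth f"
  shows "((\<lambda>t::real. (iter_dd f (map (\<lambda>(p,q). p + t *\<^sub>R q) PQ) (z0 + t *\<^sub>R v + (t*t) *\<^sub>R w) - iter_dd f (map fst PQ) z0) /\<^sub>R t)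
     \<longlongrightarrow> iter_dd f (v # map fst PQ) z0 + (\<Sum>j<length PQ. iter_dd f ((map fst PQ)[j := snd (PQ!j)]) z0)) (at 0)"
  using assms
proof (induction PQ arbitrary: f rule: rev_induct)
  case Nil
  then show ?case using base_quad[OF Nil] by simp
next
  case (snoc pq PQ)
  obtain p q where pq: "pq = (p, q)" by (cases pq)
  let ?gp = "iter_dd f [p]" and ?gq = "iter_dd f [q]"
  have gp: "smooth ?gp" by (rule smooth_iter_dd[OF snoc.prems])
  have gq: "smooth ?gq" by (rule smooth_iter_dd[OF snoc.prems])
  let ?W = "\<lambda>t::real. map (\<lambda>(p,q). p + t *\<^sub>R q) PQ"
  let ?z = "\<lambda>t::real. z0 + t *\<^sub>R v + (t*t) *\<^sub>R w"
  let ?P = "map fst PQ"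
  have eq: "iter_dd f (map (\<lambda>(p,q). p + t *\<^sub>R q) (PQ @ [pq])) x = iter_dd ?gp (?W t) x + t *\<^sub>R iter_dd ?gq (?W t) x" for t x
  proof -
    have "iter_dd f (map (\<lambda>(p,q). p + t *\<^sub>R q) (PQ @ [pq])) x = iter_dd (iter_dd f [p + t *\<^sub>R q]) (?W t) x"
      by (simp add: pq iter_dd_append)
    also have "\<dots> = iter_dd (\<lambda>x. ?gp x + t *\<^sub>R ?gq x) (?W t) x"
      by (simp only: iter_dd_single_lin[OF snoc.prems])
    also have "\<dots> = iter_dd ?gp (?W t) x + t *\<^sub>R iter_dd ?gq (?W t) x"
      by (simp only: iter_dd_lin[OF gp gq])
    finally show ?thesis .
  qed
  have eq0: "iter_dd f (map fst (PQ @ [pq])) z0 = iter_dd ?gp ?P z0"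
    by (simp add: pq iter_dd_append)
  have IH: "((\<lambda>t::real. (iter_dd ?gp (?W t) (?z t) - iter_dd ?gp ?P z0) /\<^sub>R t)
     \<longlongrightarrow> iter_dd ?gp (v # ?P) z0 + (\<Sum>j<length PQ. iter_dd ?gp (?P[j := snd (PQ!j)]) z0)) (at 0)"
    by (rule snoc.IH[OF gp])
  have X: "((\<lambda>t. iter_dd ?gq (?W t) (?z t)) \<longlongrightarrow> iter_dd ?gq ?P z0) (at 0)"
    by (rule cont_slots[OF gq])
  have lim: "((\<lambda>t. (iter_dd ?gp (?W t) (?z t) - iter_dd ?gp ?P z0) /\<^sub>R t + iter_dd ?gq (?W t) (?z t))
      \<longlongrightarrow> (iter_dd ?gp (v # ?P) z0 + (\<Sum>j<length PQ. iter_dd ?gp (?P[j := snd (PQ!j)]) z0)) + iter_dd ?gq ?P z0) (at 0)"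
    by (rule tendsto_add[OF IH X])
  have target: "iter_dd f (v # map fst (PQ @ [pq])) z0 + (\<Sum>j<length (PQ @ [pq]). iter_dd f ((map fst (PQ @ [pq]))[j := snd ((PQ @ [pq])!j)]) z0)
     = (iter_dd ?gp (v # ?P) z0 + (\<Sum>j<length PQ. iter_dd ?gp (?P[j := snd (PQ!j)]) z0)) + iter_dd ?gq ?P z0"
  proof -
    have s: "(\<Sum>j<length (PQ @ [pq]). iter_dd f ((map fst (PQ @ [pq]))[j := snd ((PQ @ [pq])!j)]) z0)
      = (\<Sum>j<length PQ. iter_dd f ((map fst (PQ @ [pq]))[j := snd ((PQ @ [pq])!j)]) z0) + iter_dd f (?P @ [q]) z0"
      by (simp add: pq list_update_append)
    have s2: "(\<Sum>j<length PQ. iter_dd f ((map fst (PQ @ [pq]))[j := snd ((PQ @ [pq])!j)]) z0)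
       = (\<Sum>j<length PQ. iter_dd ?gp (?P[j := snd (PQ!j)]) z0)"
      by (rule sum.cong) (auto simp: pq nth_append list_update_append iter_dd_append)
    show ?thesis unfolding s s2 by (simp add: pq iter_dd_append)
  qed
  have "\<forall>\<^sub>F t in at 0. (iter_dd ?gp (?W t) (?z t) - iter_dd ?gp ?P z0) /\<^sub>R t + iter_dd ?gq (?W t) (?z t)
     = (iter_dd f (map (\<lambda>(p,q). p + t *\<^sub>R q) (PQ @ [pq])) (?z t) - iter_dd f (map fst (PQ @ [pq])) z0) /\<^sub>R t"
    unfolding eq eq0 by (auto simp: eventually_at_filter algebra_simps)
  with lim show ?case unfolding target
    by (rule tendsto_cong[THEN iffD1, rotated])
qed

datatype slot = Eta | SA nat | SB nat
datatype trm = Trm real nat nat "nat list" "slot list"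

fun evalS :: "real \<times> ('a::real_normed_vector \<times> 'a) \<Rightarrow> (real \<times> ('a \<times> 'a)) list \<Rightarrow> slot \<Rightarrow> 'a" where
  "evalS x vs Eta = snd (snd x)"
| "evalS x vs (SA i) = fst (snd (vs ! i))"
| "evalS x vs (SB i) = snd (snd (vs ! i))"

fun shiftS :: "slot \<Rightarrow> slot" where
  "shiftS Eta = Eta" | "shiftS (SA i) = SA (Suc i)" | "shiftS (SB i) = SB (Suc i)"

definition zpt :: "real \<Rightarrow> real \<times> ('a::real_normed_vector \<times> 'a) \<Rightarrow> 'a" where
  "zpt s x = fst (snd x) + (s * fst x) *\<^sub>R snd (snd x)"

fun coefT :: "trm \<Rightarrow> real \<Rightarrow> real \<times> ('a::real_normed_vector \<times> 'a) \<Rightarrow> (real \<times> ('a \<times> 'a)) list \<Rightarrow> real" where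
  "coefT (Trm c p q ks sl) s x vs = c * s ^ p * fst x ^ q * prod_list (map (\<lambda>i. fst (vs ! i)) ks)"

fun slotsT :: "trm \<Rightarrow> slot list" where
  "slotsT (Trm c p q ks sl) = sl"

definition evalT :: "('a::real_normed_vector \<Rightarrow> 'a) \<Rightarrow> trm \<Rightarrow> real \<Rightarrow> real \<times> ('a \<times> 'a) \<Rightarrow> (real \<times> ('a \<times> 'a)) list \<Rightarrow> 'a" where
  "evalT f T s x vs = coefT T s x vs *\<^sub>R iter_dd f (map (evalS x vs) (slotsT T)) (zpt s x)"

definition evalE :: "('a::real_normed_vector \<Rightarrow> 'a) \<Rightarrow> trm list \<Rightarrow> real \<Rightarrow> real \<times> ('a \<times> 'a) \<Rightarrow> (real \<times> ('a \<times> 'a)) list \<Rightarrow> 'a" where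
  "evalE f E s x vs = sum_list (map (\<lambda>T. evalT f T s x vs) E)"

fun derivT :: "trm \<Rightarrow> trm list" where
  "derivT (Trm c p q ks sl) =
     [Trm (c * real q) p (q - 1) (0 # map Suc ks) (map shiftS sl),
      Trm c p q (map Suc ks) (SA 0 # map shiftS sl),
      Trm c (Suc p) q (0 # map Suc ks) (Eta # map shiftS sl),
      Trm c (Suc p) (Suc q) (map Suc ks) (SB 0 # map shiftS sl)]
     @ map (\<lambda>j. Trm c p q (map Suc ks) ((map shiftS sl)[j := SB 0])) (filter (\<lambda>j. sl ! j = Eta) [0..<length sl])"

definition derivE :: "trm list \<Rightarrow> trm list" where
  "derivE E = concat (map derivT E)"

lemma evalS_shift: "evalS x (v # vs) (shiftS \<sigma>) = evalS x vs \<sigma>"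
  by (cases \<sigma>) auto

lemma map_evalS_shift: "map (evalS x (v # vs)) (map shiftS sl) = map (evalS x vs) sl"
  by (simp add: evalS_shift)

lemma prod_shift: "prod_list (map (\<lambda>i. fst ((v # vs) ! i)) (map Suc ks)) = prod_list (map (\<lambda>i. fst (vs ! i)) ks)"
  by (simp add: o_def)

lemma evalE_append: "evalE f (E1 @ E2) s x vs = evalE f E1 s x vs + evalE f E2 s x vs"
  by (simp add: evalE_def)

lemma evalE_Cons: "evalE f (T # E) s x vs = evalT f T s x vs + evalE f E s x vs"
  by (simp add: evalE_def)

lemma evalE_Nil: "evalE f [] s x vs = 0"
  by (simp add: evalE_def)

lemma pow_quot:
  "((\<lambda>t::real. ((h + t * k) ^ q - h ^ q) / t) \<longlongrightarrow> real q * h ^ (q - 1) * k) (at 0)"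
proof -
  have "((\<lambda>t::real. (h + t * k) ^ q) has_field_derivative real q * (h + 0 * k) ^ (q - 1) * (0 * 0 + 1 * k)) (at 0)"
    by (intro derivative_eq_intros) auto
  then show ?thesis by (simp add: DERIV_def)
qed

lemma derivT_correct:
  fixes f :: "'a::real_normed_vector \<Rightarrow> 'a"
  assumes f: "smooth f"
  shows "((\<lambda>t. (evalT f T s (x + t *\<^sub>R v) vs - evalT f T s x vs) /\<^sub>R t) \<longlongrightarrow> evalE f (derivT T) s x (v # vs)) (at 0)"
proof -
  obtain c p q ks sl where T: "T = Trm c p q ks sl" by (cases T)
  obtain h y \<eta> where x: "x = (h, (y, \<eta>))" by (cases x) auto
  obtain k a b where v: "v = (k, (a, b))" by (cases v) auto
  define PP where "PP = prod_list (map (\<lambda>i. fst (vs ! i)) ks)"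
  define PQ where "PQ = map (\<lambda>\<sigma>. (evalS x vs \<sigma>, if \<sigma> = Eta then b else 0)) sl"
  define P where "P = map (evalS x vs) sl"
  define z0 where "z0 = y + (s * h) *\<^sub>R \<eta>"
  define z' where "z' = a + (s * k) *\<^sub>R \<eta> + (s * h) *\<^sub>R b"
  define w where "w = (s * k) *\<^sub>R b"
  define F where "F = (\<lambda>t::real. iter_dd f (map (\<lambda>(p,q). p + t *\<^sub>R q) PQ) (z0 + t *\<^sub>R z' + (t*t) *\<^sub>R w))"
  define C where "C = (\<lambda>t::real. c * s ^ p * (h + t * k) ^ q * PP)"
  have P: "map fst PQ = P" by (simp add: PQ_def P_def o_def)
  have slots_t: "map (evalS (x + t *\<^sub>R v) vs) sl = map (\<lambda>(p,q). p + t *\<^sub>R q) PQ" for t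
  proof -
    have "evalS (x + t *\<^sub>R v) vs \<sigma> = (\<lambda>(p,q). p + t *\<^sub>R q) (evalS x vs \<sigma>, if \<sigma> = Eta then b else 0)" for \<sigma>
      by (cases \<sigma>) (auto simp: x v)
    then show ?thesis by (simp add: PQ_def)
  qed
  have z_t: "zpt s (x + t *\<^sub>R v) = z0 + t *\<^sub>R z' + (t*t) *\<^sub>R w" for t
  proof -
    have "x + t *\<^sub>R v = (h + t*k, (y + t *\<^sub>R a, \<eta> + t *\<^sub>R b))" by (simp add: x v)
    then show ?thesis unfolding zpt_def z0_def z'_def w_def
      by (simp add: scaleR_add_right scaleR_add_left ring_distribs add_ac mult_ac)
  qed
  have eval_t: "evalT f T s (x + t *\<^sub>R v) vs = C t *\<^sub>R F t" for t
    unfolding evalT_def T slotsT.simps slots_t z_t coefT.simps C_def F_def PP_def by (simp add: x v)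
  have eval_0: "evalT f T s x vs = C 0 *\<^sub>R F 0"
    using eval_t[of 0] by simp
  have F0: "F 0 = iter_dd f P z0" by (simp add: F_def P[symmetric] case_prod_beta' o_def)
  define FD where "FD = iter_dd f (z' # P) z0 + (\<Sum>j<length PQ. iter_dd f (P[j := snd (PQ!j)]) z0)"
  have FDlim: "((\<lambda>t. (F t - F 0) /\<^sub>R t) \<longlongrightarrow> FD) (at 0)"
    using lemM[OF f, of PQ z0 z' w] unfolding F0 unfolding F_def FD_def P by simp
  have Fc: "(F \<longlongrightarrow> F 0) (at 0)"
    using cont_slots[OF f, of PQ z0 z' w] unfolding F0 unfolding F_def P by simp
  have Clim: "((\<lambda>t. (C t - C 0) / t) \<longlongrightarrow> c * s ^ p * PP * (real q * h ^ (q - 1) * k)) (at 0)"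
  proof -
    have "((\<lambda>t. c * s ^ p * PP * (((h + t * k) ^ q - h ^ q) / t)) \<longlongrightarrow> c * s ^ p * PP * (real q * h ^ (q - 1) * k)) (at 0)"
      by (intro tendsto_intros pow_quot)
    then show ?thesis by (simp add: C_def algebra_simps)
  qed
  have lim: "((\<lambda>t. ((C t - C 0) / t) *\<^sub>R F t + C 0 *\<^sub>R ((F t - F 0) /\<^sub>R t))
     \<longlongrightarrow> (c * s ^ p * PP * (real q * h ^ (q - 1) * k)) *\<^sub>R F 0 + C 0 *\<^sub>R FD) (at 0)"
    by (intro tendsto_intros Clim Fc FDlim)
  have ev: "\<forall>\<^sub>F t in at 0. ((C t - C 0) / t) *\<^sub>R F t + C 0 *\<^sub>R ((F t - F 0) /\<^sub>R t)
     = (evalT f T s (x + t *\<^sub>R v) vs - evalT f T s x vs) /\<^sub>R t"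
    unfolding eval_t eval_0
  proof (rule eventually_mono[OF eventually_True])
    fix t
    have e1: "C t *\<^sub>R F t - C 0 *\<^sub>R F 0 = (C t - C 0) *\<^sub>R F t + C 0 *\<^sub>R (F t - F 0)"
      by (simp add: algebra_simps)
    show "((C t - C 0) / t) *\<^sub>R F t + C 0 *\<^sub>R ((F t - F 0) /\<^sub>R t) = (C t *\<^sub>R F t - C 0 *\<^sub>R F 0) /\<^sub>R t"
      unfolding e1 by (simp add: scaleR_add_right divide_inverse mult.commute)
  qed
  have target: "evalE f (derivT T) s x (v # vs) = (c * s ^ p * PP * (real q * h ^ (q - 1) * k)) *\<^sub>R F 0 + C 0 *\<^sub>R FD"
  proof -
    have zP: "map (evalS x (v # vs)) (map shiftS sl) = P" unfolding P_def by (rule map_evalS_shift)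
    have zz: "zpt s x = z0" by (simp add: zpt_def x z0_def)
    have pr: "prod_list (map (\<lambda>i. fst ((v # vs) ! i)) (map Suc ks)) = PP" unfolding PP_def by (rule prod_shift)
    have C0: "C 0 = c * s ^ p * h ^ q * PP" by (simp add: C_def)
    have lin: "iter_dd f (z' # P) z0 = iter_dd f (a # P) z0 + (s*k) *\<^sub>R iter_dd f (\<eta> # P) z0 + (s*h) *\<^sub>R iter_dd f (b # P) z0"
      unfolding z'_def iter_dd_slot_lin[OF f] by simp
    have part1: "evalE f [Trm (c * real q) p (q - 1) (0 # map Suc ks) (map shiftS sl),
      Trm c p q (map Suc ks) (SA 0 # map shiftS sl),
      Trm c (Suc p) q (0 # map Suc ks) (Eta # map shiftS sl),
      Trm c (Suc p) (Suc q) (map Suc ks) (SB 0 # map shiftS sl)] s x (v # vs)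
      = (c * s ^ p * PP * (real q * h ^ (q - 1) * k)) *\<^sub>R F 0 + C 0 *\<^sub>R iter_dd f (z' # P) z0"
    proof -
      have pr0: "prod_list (map (\<lambda>i. fst ((v # vs) ! i)) (0 # map Suc ks)) = k * PP"
        using pr by (simp add: v)
      have ea: "evalS x (v # vs) (SA 0) = a" and eb: "evalS x (v # vs) (SB 0) = b" and ee: "evalS x (v # vs) Eta = \<eta>"
        by (simp_all add: x v)
      have t1: "evalT f (Trm (c * real q) p (q - 1) (0 # map Suc ks) (map shiftS sl)) s x (v # vs)
          = (c * real q * s ^ p * h ^ (q - 1) * (k * PP)) *\<^sub>R iter_dd f P z0"
        unfolding evalT_def coefT.simps slotsT.simps zP zz pr0 by (simp add: x)
      have t2: "evalT f (Trm c p q (map Suc ks) (SA 0 # map shiftS sl)) s x (v # vs)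
          = (c * s ^ p * h ^ q * PP) *\<^sub>R iter_dd f (a # P) z0"
        unfolding evalT_def coefT.simps slotsT.simps list.map(2) zP zz pr ea by (simp add: x)
      have t3: "evalT f (Trm c (Suc p) q (0 # map Suc ks) (Eta # map shiftS sl)) s x (v # vs)
          = (c * s ^ Suc p * h ^ q * (k * PP)) *\<^sub>R iter_dd f (\<eta> # P) z0"
        unfolding evalT_def coefT.simps slotsT.simps list.map(2) zP zz ee by (simp add: x v o_def PP_def)
      have t4: "evalT f (Trm c (Suc p) (Suc q) (map Suc ks) (SB 0 # map shiftS sl)) s x (v # vs)
          = (c * s ^ Suc p * h ^ Suc q * PP) *\<^sub>R iter_dd f (b # P) z0"
        unfolding evalT_def coefT.simps slotsT.simps list.map(2) zP zz pr eb by (simp add: x)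
      have a1: "c * real q * s ^ p * h ^ (q - 1) * (k * PP) = c * s ^ p * PP * (real q * h ^ (q - 1) * k)"
        by (simp add: mult_ac)
      have a3: "c * s ^ Suc p * h ^ q * (k * PP) = C 0 * (s * k)" by (simp add: C0 mult_ac)
      have a4: "c * s ^ Suc p * h ^ Suc q * PP = C 0 * (s * h)" by (simp add: C0 mult_ac)
      have a2: "c * s ^ p * h ^ q * PP = C 0" by (simp add: C0)
      show ?thesis unfolding evalE_def list.map sum_list.Cons sum_list.Nil t1 t2 t3 t4 a1 a2 a3 a4 lin F0
        by (simp add: scaleR_add_right)
    qed
    have part2: "evalE f (map (\<lambda>j. Trm c p q (map Suc ks) ((map shiftS sl)[j := SB 0])) (filter (\<lambda>j. sl ! j = Eta) [0..<length sl])) s x (v # vs)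
      = C 0 *\<^sub>R (\<Sum>j<length PQ. iter_dd f (P[j := snd (PQ!j)]) z0)"
    proof -
      have "evalE f (map (\<lambda>j. Trm c p q (map Suc ks) ((map shiftS sl)[j := SB 0])) (filter (\<lambda>j. sl ! j = Eta) [0..<length sl])) s x (v # vs)
        = sum_list (map (\<lambda>j. C 0 *\<^sub>R iter_dd f (P[j := b]) z0) (filter (\<lambda>j. sl ! j = Eta) [0..<length sl]))"
        unfolding evalE_def map_map o_def
      proof (intro arg_cong[where f = sum_list] map_cong refl)
        fix j assume "j \<in> set (filter (\<lambda>j. sl ! j = Eta) [0..<length sl])"
        have "map (evalS x (v # vs)) ((map shiftS sl)[j := SB 0]) = P[j := b]"
          using zP by (simp add: map_update v)
        then show "evalT f (Trm c p q (map Suc ks) ((map shiftS sl)[j := SB 0])) s x (v # vs) = C 0 *\<^sub>R iter_dd f (P[j := b]) z0"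
          using zz pr C0 by (simp add: evalT_def x)
      qed
      also have "\<dots> = (\<Sum>j<length sl. if sl ! j = Eta then C 0 *\<^sub>R iter_dd f (P[j := b]) z0 else 0)"
        by (simp add: sum_list_map_filter' interv_sum_list_conv_sum_set_nat atLeast0LessThan)
      also have "\<dots> = (\<Sum>j<length sl. C 0 *\<^sub>R iter_dd f (P[j := snd (PQ!j)]) z0)"
      proof (rule sum.cong[OF refl])
        fix j assume j: "j \<in> {..<length sl}"
        then have "j < length P" by (simp add: P_def)
        then show "(if sl ! j = Eta then C 0 *\<^sub>R iter_dd f (P[j := b]) z0 else 0) = C 0 *\<^sub>R iter_dd f (P[j := snd (PQ!j)]) z0"
          using j by (simp add: PQ_def iter_dd_zero_slot)
      qed
      finally show ?thesis by (simp add: scaleR_sum_right PQ_def)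
    qed
    show ?thesis unfolding T derivT.simps evalE_append part1 part2 FD_def
      by (simp add: scaleR_add_right)
  qed
  show ?thesis unfolding target using lim ev by (rule tendsto_cong[THEN iffD1, rotated])
qed

lemma derivE_correct:
  fixes f :: "'a::real_normed_vector \<Rightarrow> 'a"
  assumes f: "smooth f"
  shows "((\<lambda>t. (evalE f E s (x + t *\<^sub>R v) vs - evalE f E s x vs) /\<^sub>R t) \<longlongrightarrow> evalE f (derivE E) s x (v # vs)) (at 0)"
proof (induction E)
  case Nil then show ?case by (simp add: evalE_def derivE_def)
next
  case (Cons T E)
  have "((\<lambda>t. (evalT f T s (x + t *\<^sub>R v) vs - evalT f T s x vs) /\<^sub>R t + (evalE f E s (x + t *\<^sub>R v) vs - evalE f E s x vs) /\<^sub>R t)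
     \<longlongrightarrow> evalE f (derivT T) s x (v # vs) + evalE f (derivE E) s x (v # vs)) (at 0)"
    by (intro tendsto_add derivT_correct[OF f] Cons)
  then show ?case
    by (simp add: evalE_Cons derivE_def evalE_append algebra_simps scaleR_diff_right)
qed

fun slot_ok :: "nat \<Rightarrow> slot \<Rightarrow> bool" where
  "slot_ok n Eta = True" | "slot_ok n (SA i) = (i < n)" | "slot_ok n (SB i) = (i < n)"

fun wfT :: "nat \<Rightarrow> trm \<Rightarrow> bool" where
  "wfT n (Trm c p q ks sl) = ((\<forall>i\<in>set ks. i < n) \<and> (\<forall>\<sigma>\<in>set sl. slot_ok n \<sigma>))"

definition wfE :: "nat \<Rightarrow> trm list \<Rightarrow> bool" where
  "wfE n E = (\<forall>T\<in>set E. wfT n T)"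

lemma slot_ok_shift: "slot_ok n \<sigma> \<Longrightarrow> slot_ok (Suc n) (shiftS \<sigma>)"
  by (cases \<sigma>) auto

lemma wf_derivT: "wfT n T \<Longrightarrow> wfE (Suc n) (derivT T)"
proof (cases T)
  case (Trm c p q ks sl)
  assume w: "wfT n T"
  have sl: "\<forall>\<sigma>\<in>set (map shiftS sl). slot_ok (Suc n) \<sigma>" using w Trm by (auto intro: slot_ok_shift)
  have upd: "\<forall>\<sigma>\<in>set ((map shiftS sl)[j := SB 0]). slot_ok (Suc n) \<sigma>" for j
    using sl set_update_subset_insert[of "map shiftS sl" j "SB 0"] by auto
  show ?thesis using w Trm sl upd by (auto simp: wfE_def)
qed

lemma wf_derivE: "wfE n E \<Longrightarrow> wfE (Suc n) (derivE E)"
  using wf_derivT by (auto simp: wfE_def derivE_def)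

lemma tendsto_prod_list_seq:
  fixes g :: "nat \<Rightarrow> nat \<Rightarrow> real"
  assumes "\<And>i. i \<in> set ks \<Longrightarrow> (\<lambda>k. g k i) \<longlonglongrightarrow> g0 i"
  shows "(\<lambda>k. prod_list (map (g k) ks)) \<longlonglongrightarrow> prod_list (map g0 ks)"
  using assms by (induction ks) (auto intro!: tendsto_mult)

lemma evalT_cont:
  fixes f :: "'a::real_normed_vector \<Rightarrow> 'a"
  assumes f: "smooth f" and w: "wfT n T" and l: "length vs = n" and lk: "\<forall>k. length (vss k) = n"
    and ss: "ss \<longlonglongrightarrow> s" and xs: "xs \<longlonglongrightarrow> x" and c: "\<forall>i<n. (\<lambda>k. vss k ! i) \<longlonglongrightarrow> vs ! i"
  shows "(\<lambda>k. evalT f T (ss k) (xs k) (vss k)) \<longlonglongrightarrow> evalT f T s x vs"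
proof (cases T)
  case (Trm c0 p q ks sl)
  have coef: "(\<lambda>k. coefT T (ss k) (xs k) (vss k)) \<longlonglongrightarrow> coefT T s x vs"
  proof -
    have pr: "(\<lambda>k. prod_list (map (\<lambda>i. fst (vss k ! i)) ks)) \<longlonglongrightarrow> prod_list (map (\<lambda>i. fst (vs ! i)) ks)"
    proof (rule tendsto_prod_list_seq[of ks "\<lambda>k i. fst (vss k ! i)"])
      fix i assume "i \<in> set ks"
      then have "i < n" using w Trm by auto
      then show "(\<lambda>k. fst (vss k ! i)) \<longlonglongrightarrow> fst (vs ! i)" using c by (auto intro: tendsto_fst)
    qed
    show ?thesis unfolding Trm coefT.simps
      by (intro tendsto_mult tendsto_const tendsto_power tendsto_fst ss xs pr)
  qed
  have sl: "(\<lambda>k. iter_dd f (map (evalS (xs k) (vss k)) sl) (zpt (ss k) (xs k))) \<longlonglongrightarrow> iter_dd f (map (evalS x vs) sl) (zpt s x)"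
  proof (rule smooth_S2[OF f])
    show "(\<lambda>k. zpt (ss k) (xs k)) \<longlonglongrightarrow> zpt s x"
      unfolding zpt_def by (intro tendsto_intros ss xs)
    show "\<forall>i<length (map (evalS x vs) sl). (\<lambda>k. map (evalS (xs k) (vss k)) sl ! i) \<longlonglongrightarrow> map (evalS x vs) sl ! i"
    proof (intro allI impI)
      fix i assume i: "i < length (map (evalS x vs) sl)"
      then have ok: "slot_ok n (sl ! i)" using w Trm by auto
      have "(\<lambda>k. evalS (xs k) (vss k) (sl ! i)) \<longlonglongrightarrow> evalS x vs (sl ! i)"
        using ok c xs by (cases "sl ! i") (auto intro!: tendsto_intros)
      then show "(\<lambda>k. map (evalS (xs k) (vss k)) sl ! i) \<longlonglongrightarrow> map (evalS x vs) sl ! i"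
        using i by simp
    qed
  qed simp
  show ?thesis unfolding evalT_def using coef sl Trm by (auto intro: tendsto_scaleR)
qed

lemma evalE_cont:
  fixes f :: "'a::real_normed_vector \<Rightarrow> 'a"
  assumes f: "smooth f" and w: "wfE n E" and l: "length vs = n" and lk: "\<forall>k. length (vss k) = n"
    and ss: "ss \<longlonglongrightarrow> s" and xs: "xs \<longlonglongrightarrow> x" and c: "\<forall>i<n. (\<lambda>k. vss k ! i) \<longlonglongrightarrow> vs ! i"
  shows "(\<lambda>k. evalE f E (ss k) (xs k) (vss k)) \<longlonglongrightarrow> evalE f E s x vs"
  using w
proof (induction E)
  case Nil then show ?case by (simp add: evalE_def)
next
  case (Cons T E)
  then have "wfT n T" "wfE n E" by (auto simp: wfE_def)
  then show ?case unfolding evalE_Cons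
    using evalT_cont[OF f _ l lk ss xs c] Cons.IH by (auto intro: tendsto_add)
qed

lemma unif_lemma:
  fixes G :: "nat \<Rightarrow> 'c::metric_space \<Rightarrow> 'b::metric_space" and G0 :: "'c \<Rightarrow> 'b"
  assumes K: "compact K"
    and H: "\<And>r s s0. strict_mono r \<Longrightarrow> (\<forall>n. s n \<in> K) \<Longrightarrow> s \<longlonglongrightarrow> s0 \<Longrightarrow> s0 \<in> K \<Longrightarrow> (\<lambda>n. G (r n) (s n)) \<longlonglongrightarrow> G0 s0"
    and H0: "\<And>s s0. (\<forall>n. s n \<in> K) \<Longrightarrow> s \<longlonglongrightarrow> s0 \<Longrightarrow> s0 \<in> K \<Longrightarrow> (\<lambda>n. G0 (s n)) \<longlonglongrightarrow> G0 s0"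
    and e: "e > 0"
  shows "\<exists>N. \<forall>n\<ge>N. \<forall>s\<in>K. dist (G n s) (G0 s) < e"
proof (rule ccontr)
  assume "\<not> ?thesis"
  then have bad: "\<forall>N. \<exists>n\<ge>N. \<exists>s\<in>K. dist (G n s) (G0 s) \<ge> e" by (auto simp: not_less)
  let ?B = "{n. \<exists>s\<in>K. dist (G n s) (G0 s) \<ge> e}"
  have inf: "infinite ?B" using bad by (auto simp: infinite_nat_iff_unbounded_le)
  obtain r :: "nat \<Rightarrow> nat" where r: "strict_mono r" and rB: "\<And>n. r n \<in> ?B"
    using infinite_enumerate[OF inf] by auto
  then have "\<forall>n. \<exists>s. s \<in> K \<and> dist (G (r n) s) (G0 s) \<ge> e" by auto
  then obtain s where s: "\<And>n. s n \<in> K" and sd: "\<And>n. dist (G (r n) (s n)) (G0 (s n)) \<ge> e"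
    by (metis (mono_tags))
  obtain l r' where l: "l \<in> K" and r': "strict_mono r'" and sl: "(s \<circ> r') \<longlonglongrightarrow> l"
  proof -
    have "seq_compact K" by (rule compact_imp_seq_compact[OF K])
    then show ?thesis using s that unfolding seq_compact_def by blast
  qed
  have "(\<lambda>n. G ((r \<circ> r') n) ((s \<circ> r') n)) \<longlonglongrightarrow> G0 l"
  proof -
    have sm: "strict_mono (r \<circ> r')" using strict_mono_o[OF r r'] .
    have "\<forall>n. (s \<circ> r') n \<in> K" using s by simp
    from H[OF sm this sl l] show ?thesis .
  qed
  moreover have "(\<lambda>n. G0 ((s \<circ> r') n)) \<longlonglongrightarrow> G0 l"
    using H0[of "s \<circ> r'" l] s sl l by (simp add: o_def)
  ultimately have "(\<lambda>n. dist (G ((r \<circ> r') n) ((s \<circ> r') n)) (G0 ((s \<circ> r') n))) \<longlonglongrightarrow> dist (G0 l) (G0 l)"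
    by (rule tendsto_dist)
  then have "\<forall>\<^sub>F n in sequentially. dist (G ((r \<circ> r') n) ((s \<circ> r') n)) (G0 ((s \<circ> r') n)) < e"
    using e by (auto dest: order_tendstoD(2))
  then obtain n where "dist (G ((r \<circ> r') n) ((s \<circ> r') n)) (G0 ((s \<circ> r') n)) < e"
    using eventually_sequentially by auto
  with sd[of "r' n"] show False by simp
qed

lemma cont_on_seq:
  fixes H :: "real \<Rightarrow> 'b::real_normed_vector"
  assumes "\<And>ss s0. ss \<longlonglongrightarrow> s0 \<Longrightarrow> (\<lambda>n. H (ss n)) \<longlonglongrightarrow> H s0"
  shows "continuous_on S H"
  by (rule continuous_on_sequentiallyI) (use assms in auto)

lemma dui:
  fixes H :: "real \<Rightarrow> 'x::real_normed_vector \<Rightarrow> 'b::banach" and H' :: "real \<Rightarrow> 'x \<Rightarrow> 'b"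
  assumes D: "\<And>s y. ((\<lambda>t. (H s (y + t *\<^sub>R v) - H s y) /\<^sub>R t) \<longlongrightarrow> H' s y) (at 0)"
    and C: "\<And>s0 y0 (ss::nat\<Rightarrow>real) ys. ss \<longlonglongrightarrow> s0 \<Longrightarrow> ys \<longlonglongrightarrow> y0 \<Longrightarrow> (\<lambda>n. H' (ss n) (ys n)) \<longlonglongrightarrow> H' s0 y0"
    and C0: "\<And>s0 y0 (ss::nat\<Rightarrow>real) ys. ss \<longlonglongrightarrow> s0 \<Longrightarrow> ys \<longlonglongrightarrow> y0 \<Longrightarrow> (\<lambda>n. H (ss n) (ys n)) \<longlonglongrightarrow> H s0 y0"
  shows "((\<lambda>t. (integral {0..1} (\<lambda>s. H s (x + t *\<^sub>R v)) - integral {0..1} (\<lambda>s. H s x)) /\<^sub>R t)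
           \<longlongrightarrow> integral {0..1} (\<lambda>s. H' s x)) (at 0)"
proof -
  have intH: "(\<lambda>s. H s y) integrable_on {0..1}" for y
    by (rule integrable_continuous_interval, rule cont_on_seq) (rule C0, auto)
  have intH': "(\<lambda>s. H' s y) integrable_on {0..1}" for y
    by (rule integrable_continuous_interval, rule cont_on_seq) (rule C, auto)
  define q where "q = (\<lambda>t s. (H s (x + t *\<^sub>R v) - H s x) /\<^sub>R t)"
  have intq: "(\<lambda>s. q t s - H' s x) integrable_on {0..1}" for t
    unfolding q_def by (intro integrable_diff integrable_cmul intH intH')
  have intq1: "q t integrable_on {0..1}" for t
    unfolding q_def by (intro integrable_diff integrable_cmul intH)
  show ?thesis
  proof (subst tendsto_at_iff_sequentially, intro allI impI)
    fix X :: "nat \<Rightarrow> real" assume X0: "\<forall>i. X i \<in> UNIV - {0}" and X: "X \<longlonglongrightarrow> 0"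
    have eq: "(integral {0..1} (\<lambda>s. H s (x + X n *\<^sub>R v)) - integral {0..1} (\<lambda>s. H s x)) /\<^sub>R X n
       = integral {0..1} (q (X n))" for n
      unfolding q_def
      by (simp add: integral_diff[OF intH intH])
    show "((\<lambda>t. (integral {0..1} (\<lambda>s. H s (x + t *\<^sub>R v)) - integral {0..1} (\<lambda>s. H s x)) /\<^sub>R t) \<circ> X)
        \<longlonglongrightarrow> integral {0..1} (\<lambda>s. H' s x)"
      unfolding o_def eq
    proof (rule LIMSEQ_I)
      fix e :: real assume e: "0 < e"
      let ?K = "{0..1::real} \<times> {0..1::real}"
      have "\<exists>N. \<forall>n\<ge>N. \<forall>p\<in>?K. dist ((\<lambda>n p. H' (fst p) (x + (snd p * X n) *\<^sub>R v)) n p) ((\<lambda>p. H' (fst p) x) p) < e/2"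
      proof (rule unif_lemma)
        show "compact ?K" by (intro compact_Times compact_Icc)
        show "e/2 > 0" using e by simp
        fix r :: "nat \<Rightarrow> nat" and s :: "nat \<Rightarrow> real \<times> real" and s0
        assume r: "strict_mono r" and sK: "\<forall>n. s n \<in> ?K" and s: "s \<longlonglongrightarrow> s0" and s0: "s0 \<in> ?K"
        have Xr: "(X \<circ> r) \<longlonglongrightarrow> 0" using LIMSEQ_subseq_LIMSEQ[OF X r] .
        have "(\<lambda>n. x + (snd (s n) * (X \<circ> r) n) *\<^sub>R v) \<longlonglongrightarrow> x + (snd s0 * 0) *\<^sub>R v"
          by (intro tendsto_intros s Xr)
        then show "(\<lambda>n. H' (fst (s n)) (x + (snd (s n) * X (r n)) *\<^sub>R v)) \<longlonglongrightarrow> H' (fst s0) x"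
          by (intro C) (auto intro: tendsto_fst s)
      next
        fix s :: "nat \<Rightarrow> real \<times> real" and s0
        assume "s \<longlonglongrightarrow> s0"
        then show "(\<lambda>n. H' (fst (s n)) x) \<longlonglongrightarrow> H' (fst s0) x"
          by (intro C) (auto intro: tendsto_fst)
      qed
      then obtain N where N0: "\<forall>n\<ge>N. \<forall>p\<in>?K. dist (H' (fst p) (x + (snd p * X n) *\<^sub>R v)) (H' (fst p) x) < e/2"
        by blast
      have N: "dist (H' s (x + (\<tau> * X n) *\<^sub>R v)) (H' s x) < e/2" if "n \<ge> N" "s \<in> {0..1}" "\<tau> \<in> {0..1}" for n s \<tau>
        using N0[rule_format, of n "(s, \<tau>)"] that by auto
      show "\<exists>N. \<forall>n\<ge>N. norm (integral {0..1} (q (X n)) - integral {0..1} (\<lambda>s. H' s x)) < e"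
      proof (intro exI[of _ N] allI impI)
        fix n assume n: "n \<ge> N"
        have Xn: "X n \<noteq> 0" using X0 by auto
        have bnd: "norm (q (X n) s - H' s x) \<le> e/2" if s: "s \<in> {0..1}" for s
        proof -
          have "norm (H s (x + X n *\<^sub>R v) - H s x - X n *\<^sub>R H' s x) \<le> e/2 * \<bar>X n\<bar>"
          proof (rule mv_line[where DF = "\<lambda>\<sigma>. H' s (x + \<sigma> *\<^sub>R v)"])
            show "((\<lambda>\<tau>. (H s (x + (\<sigma> + \<tau>) *\<^sub>R v) - H s (x + \<sigma> *\<^sub>R v)) /\<^sub>R \<tau>) \<longlongrightarrow> H' s (x + \<sigma> *\<^sub>R v)) (at 0)" for \<sigma>
              using D[of s "x + \<sigma> *\<^sub>R v"] by (simp add: scaleR_add_left add.assoc)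
            fix \<sigma> assume \<sigma>: "\<sigma> \<in> closed_segment 0 (X n)"
            define \<tau> where "\<tau> = \<sigma> / X n"
            have \<tau>: "\<tau> \<in> {0..1}"
            proof (cases "X n > 0")
              case True
              then have "0 \<le> \<sigma>" "\<sigma> \<le> X n" using \<sigma> by (auto simp: closed_segment_eq_real_ivl)
              then show ?thesis using True by (simp add: \<tau>_def divide_le_eq_1 zero_le_divide_iff)
            next
              case False
              then have "X n < 0" using Xn by simp
              then have "X n \<le> \<sigma>" "\<sigma> \<le> 0" using \<sigma> by (auto simp: closed_segment_eq_real_ivl)
              then show ?thesis using \<open>X n < 0\<close> by (simp add: \<tau>_def divide_le_eq_1 zero_le_divide_iff)
            qed
            have "\<sigma> = \<tau> * X n" using Xn by (simp add: \<tau>_def)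
            then show "norm (H' s (x + \<sigma> *\<^sub>R v) - H' s x) \<le> e/2"
              using N[OF n s \<tau>] by (simp add: dist_norm)
          qed
          moreover have "q (X n) s - H' s x = (1 / X n) *\<^sub>R (H s (x + X n *\<^sub>R v) - H s x - X n *\<^sub>R H' s x)"
            using Xn by (simp add: q_def scaleR_diff_right inverse_eq_divide)
          ultimately show ?thesis using Xn
            by (simp add: divide_le_eq mult.commute)
        qed
        have "norm (integral {0..1} (\<lambda>s. q (X n) s - H' s x)) \<le> e/2 * Henstock_Kurzweil_Integration.content (cbox (0::real) 1)"
          by (rule has_integral_bound[of "e/2" "\<lambda>s. q (X n) s - H' s x"]) (use e intq bnd in auto)
        then have "norm (integral {0..1} (q (X n)) - integral {0..1} (\<lambda>s. H' s x)) \<le> e/2"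
          using integral_diff[OF intq1 intH', of "X n"] by simp
        then show "norm (integral {0..1} (q (X n)) - integral {0..1} (\<lambda>s. H' s x)) < e"
          using e by simp
      qed
    qed
  qed
qed

fun Es :: "nat \<Rightarrow> trm list" where
  "Es 0 = [Trm 1 0 0 [] [Eta]]"
| "Es (Suc n) = derivE (Es n)"

lemma wf_Es: "wfE n (Es n)"
proof (induction n)
  case 0 then show ?case by (simp add: wfE_def)
next
  case (Suc n) then show ?case by (simp add: wf_derivE)
qed

definition Qf :: "('a::banach \<Rightarrow> 'a) \<Rightarrow> real \<times> ('a \<times> 'a) \<Rightarrow> 'a" where
  "Qf f x = integral {0..1} (\<lambda>s. evalE f (Es 0) s x [])"

lemma Q_step:
  fixes f :: "'a::banach \<Rightarrow> 'a"
  assumes f: "smooth f"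
  shows "((\<lambda>t. (integral {0..1} (\<lambda>s. evalE f (Es (length vs)) s (x + t *\<^sub>R v) vs) - integral {0..1} (\<lambda>s. evalE f (Es (length vs)) s x vs)) /\<^sub>R t)
           \<longlongrightarrow> integral {0..1} (\<lambda>s. evalE f (Es (length (v # vs))) s x (v # vs))) (at 0)"
proof (rule dui)
  show "((\<lambda>t. (evalE f (Es (length vs)) s (y + t *\<^sub>R v) vs - evalE f (Es (length vs)) s y vs) /\<^sub>R t) \<longlongrightarrow> evalE f (Es (length (v # vs))) s y (v # vs)) (at 0)" for s y
    using derivE_correct[OF f] by simp
  show "(\<lambda>n. evalE f (Es (length (v # vs))) (ss n) (ys n) (v # vs)) \<longlonglongrightarrow> evalE f (Es (length (v # vs))) s0 y0 (v # vs)"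
    if "ss \<longlonglongrightarrow> s0" "ys \<longlonglongrightarrow> y0" for s0 y0 ss ys
    by (rule evalE_cont[OF f wf_Es, where vss = "\<lambda>k. v # vs"]) (use that in auto)
  show "(\<lambda>n. evalE f (Es (length vs)) (ss n) (ys n) vs) \<longlonglongrightarrow> evalE f (Es (length vs)) s0 y0 vs"
    if "ss \<longlonglongrightarrow> s0" "ys \<longlonglongrightarrow> y0" for s0 y0 ss ys
    by (rule evalE_cont[OF f wf_Es, where vss = "\<lambda>k. vs"]) (use that in auto)
qed

lemma Q_iter:
  fixes f :: "'a::banach \<Rightarrow> 'a"
  assumes f: "smooth f"
  shows "iter_dd (Qf f) vs = (\<lambda>x. integral {0..1} (\<lambda>s. evalE f (Es (length vs)) s x vs))"
proof (induction vs)
  case Nil then show ?case by (simp add: Qf_def)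
next
  case (Cons v vs)
  show ?case
  proof
    fix x
    show "iter_dd (Qf f) (v # vs) x = integral {0..1} (\<lambda>s. evalE f (Es (length (v # vs))) s x (v # vs))"
      using gderiv_eq[OF Q_step[OF f, of vs x v]] Cons by simp
  qed
qed

lemma smooth_Q:
  fixes f :: "'a::banach \<Rightarrow> 'a"
  assumes f: "smooth f"
  shows "smooth (Qf f)"
  unfolding smooth_def Q_iter[OF f]
proof (intro conjI allI impI)
  fix vs v x
  show "((\<lambda>t. (integral {0..1} (\<lambda>s. evalE f (Es (length vs)) s (x + t *\<^sub>R v) vs) - integral {0..1} (\<lambda>s. evalE f (Es (length vs)) s x vs)) /\<^sub>R t)
           \<longlongrightarrow> integral {0..1} (\<lambda>s. evalE f (Es (length (v # vs))) s x (v # vs))) (at 0)"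
    by (rule Q_step[OF f])
next
  fix vs x and xs :: "nat \<Rightarrow> real \<times> ('a \<times> 'a)" and vss :: "nat \<Rightarrow> (real \<times> ('a \<times> 'a)) list"
  assume l: "\<forall>k. length (vss k) = length vs" and xs: "xs \<longlonglongrightarrow> x" and c: "\<forall>i<length vs. (\<lambda>k. vss k ! i) \<longlonglongrightarrow> vs ! i"
  let ?n = "length vs"
  define G where "G = (\<lambda>k s. evalE f (Es ?n) s (xs k) (vss k))"
  define G0 where "G0 = (\<lambda>s. evalE f (Es ?n) s x vs)"
  have int: "(\<lambda>s. evalE f (Es ?n) s y ws) integrable_on {0..1}" if "length ws = ?n" for y ws
    by (rule integrable_continuous_interval, rule cont_on_seq, rule evalE_cont[OF f wf_Es, where vss = "\<lambda>k. ws"]) (use that in auto)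
  have "(\<lambda>k. integral {0..1} (G k)) \<longlonglongrightarrow> integral {0..1} G0"
  proof (rule LIMSEQ_I)
    fix e :: real assume e: "0 < e"
    have "\<exists>N. \<forall>k\<ge>N. \<forall>s\<in>{0..1}. dist (G k s) (G0 s) < e/2"
    proof (rule unif_lemma)
      show "compact {0..1::real}" by simp
      show "e/2 > 0" using e by simp
      fix r :: "nat \<Rightarrow> nat" and s :: "nat \<Rightarrow> real" and s0
      assume r: "strict_mono r" and "\<forall>n. s n \<in> {0..1}" and s: "s \<longlonglongrightarrow> s0" and "s0 \<in> {0..1}"
      have xr: "(xs \<circ> r) \<longlonglongrightarrow> x" by (rule LIMSEQ_subseq_LIMSEQ[OF xs r])
      have cr: "\<forall>i<?n. (\<lambda>k. (vss \<circ> r) k ! i) \<longlonglongrightarrow> vs ! i"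
        using c LIMSEQ_subseq_LIMSEQ[OF _ r] by (auto simp: o_def)
      show "(\<lambda>k. G (r k) (s k)) \<longlonglongrightarrow> G0 s0"
        using evalE_cont[OF f wf_Es refl _ s xr cr] l by (simp add: o_def G_def G0_def)
    next
      fix s :: "nat \<Rightarrow> real" and s0
      assume "\<forall>n. s n \<in> {0..1}" and s: "s \<longlonglongrightarrow> s0" and "s0 \<in> {0..1}"
      show "(\<lambda>k. G0 (s k)) \<longlonglongrightarrow> G0 s0"
        unfolding G0_def by (rule evalE_cont[OF f wf_Es, where vss = "\<lambda>k. vs"]) (use s in auto)
    qed
    then obtain N where N: "\<And>k s. k \<ge> N \<Longrightarrow> s \<in> {0..1} \<Longrightarrow> dist (G k s) (G0 s) < e/2" by blast
    show "\<exists>N. \<forall>k\<ge>N. norm (integral {0..1} (G k) - integral {0..1} G0) < e"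
    proof (intro exI[of _ N] allI impI)
      fix k assume k: "k \<ge> N"
      have "norm (integral {0..1} (\<lambda>s. G k s - G0 s)) \<le> e/2 * Henstock_Kurzweil_Integration.content (cbox (0::real) 1)"
      proof (rule has_integral_bound[of "e/2" "\<lambda>s. G k s - G0 s"])
        show "((\<lambda>s. G k s - G0 s) has_integral integral {0..1} (\<lambda>s. G k s - G0 s)) (cbox 0 1)"
          using integrable_integral[OF integrable_diff[OF int[where y = "xs k" and ws = "vss k"] int[where y = x and ws = vs]]] l by (auto simp: G_def G0_def)
        show "norm (G k s - G0 s) \<le> e/2" if "s \<in> cbox 0 1" for s
          using N[OF k, of s] that by (simp add: dist_norm less_imp_le)
      qed (use e in auto)
      then have "norm (integral {0..1} (G k) - integral {0..1} G0) \<le> e/2"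
        using integral_diff[OF int[where y = "xs k" and ws = "vss k"] int[where y = x and ws = vs]] l by (simp add: G_def G0_def)
      then show "norm (integral {0..1} (G k) - integral {0..1} G0) < e" using e by simp
    qed
  qed
  then show "(\<lambda>k. integral {0..1} (\<lambda>s. evalE f (Es (length (vss k))) s (xs k) (vss k))) \<longlonglongrightarrow> integral {0..1} G0"
    using l by (simp add: G_def G0_def)
qed

lemma iter_dd_affine:
  assumes A: "\<And>x t v. A (x + t *\<^sub>R v) = A x + t *\<^sub>R L v"
  shows "iter_dd (\<lambda>x. g (A x)) vs = (\<lambda>x. iter_dd g (map L vs) (A x))"
proof (induction vs)
  case Nil then show ?case by simp
next
  case (Cons v vs)
  then show ?case by (simp add: gderiv_def A)
qed

lemma smooth_affine:
  fixes A :: "'a::real_normed_vector \<Rightarrow> 'b::real_normed_vector" and g :: "'b \<Rightarrow> 'c::real_normed_vector"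
  assumes g: "smooth g" and A: "\<And>x t v. A (x + t *\<^sub>R v) = A x + t *\<^sub>R L v" and L: "bounded_linear L"
  shows "smooth (\<lambda>x. g (A x))"
  unfolding smooth_def iter_dd_affine[OF A]
proof (intro conjI allI impI)
  fix vs v x
  show "((\<lambda>t::real. (iter_dd g (map L vs) (A (x + t *\<^sub>R v)) - iter_dd g (map L vs) (A x)) /\<^sub>R t) \<longlongrightarrow> iter_dd g (map L (v # vs)) (A x)) (at 0)"
    unfolding A using smooth_S1[OF g] by simp
next
  fix vs x and xs :: "nat \<Rightarrow> 'a" and vss :: "nat \<Rightarrow> 'a list"
  assume l: "\<forall>k. length (vss k) = length vs" and xs: "xs \<longlonglongrightarrow> x" and c: "\<forall>i<length vs. (\<lambda>k. vss k ! i) \<longlonglongrightarrow> vs ! i"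
  have A0: "A y = A 0 + L y" for y using A[of 0 1 y] by simp
  have Ax: "(\<lambda>k. A (xs k)) \<longlonglongrightarrow> A x"
    unfolding A0[of x] A0[of "xs _"] by (intro tendsto_add tendsto_const bounded_linear.tendsto[OF L] xs)
  show "(\<lambda>k. iter_dd g (map L (vss k)) (A (xs k))) \<longlonglongrightarrow> iter_dd g (map L vs) (A x)"
  proof (rule smooth_S2[OF g])
    show "\<forall>i<length (map L vs). (\<lambda>k. map L (vss k) ! i) \<longlonglongrightarrow> map L vs ! i"
      using c l by (auto intro: bounded_linear.tendsto[OF L])
  qed (use l Ax in auto)
qed

lemma iter_dd_pair:
  assumes F: "smooth F" and G: "smooth G"
  shows "iter_dd (\<lambda>x. (F x, G x)) vs = (\<lambda>x. (iter_dd F vs x, iter_dd G vs x))"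
proof (induction vs)
  case Nil then show ?case by simp
next
  case (Cons v vs)
  show ?case
  proof
    fix x
    have "((\<lambda>t::real. ((iter_dd F vs (x + t *\<^sub>R v) - iter_dd F vs x) /\<^sub>R t, (iter_dd G vs (x + t *\<^sub>R v) - iter_dd G vs x) /\<^sub>R t))
        \<longlongrightarrow> (iter_dd F (v # vs) x, iter_dd G (v # vs) x)) (at 0)"
      by (intro tendsto_Pair smooth_S1[OF F] smooth_S1[OF G])
    then have "gderiv (\<lambda>x. (iter_dd F vs x, iter_dd G vs x)) x v = (iter_dd F (v # vs) x, iter_dd G (v # vs) x)"
      by (intro gderiv_eq) simp
    then show "iter_dd (\<lambda>x. (F x, G x)) (v # vs) x = (iter_dd F (v # vs) x, iter_dd G (v # vs) x)"
      using Cons by simp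
  qed
qed

lemma smooth_pair:
  fixes F :: "'a::real_normed_vector \<Rightarrow> 'b::real_normed_vector" and G :: "'a \<Rightarrow> 'c::real_normed_vector"
  assumes F: "smooth F" and G: "smooth G"
  shows "smooth (\<lambda>x. (F x, G x))"
  unfolding smooth_def iter_dd_pair[OF F G]
proof (intro conjI allI impI)
  fix vs v x
  have "((\<lambda>t::real. ((iter_dd F vs (x + t *\<^sub>R v) - iter_dd F vs x) /\<^sub>R t, (iter_dd G vs (x + t *\<^sub>R v) - iter_dd G vs x) /\<^sub>R t))
        \<longlongrightarrow> (iter_dd F (v # vs) x, iter_dd G (v # vs) x)) (at 0)"
    by (intro tendsto_Pair smooth_S1[OF F] smooth_S1[OF G])
  then show "((\<lambda>t::real. ((iter_dd F vs (x + t *\<^sub>R v), iter_dd G vs (x + t *\<^sub>R v)) - (iter_dd F vs x, iter_dd G vs x)) /\<^sub>R t)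
        \<longlongrightarrow> (iter_dd F (v # vs) x, iter_dd G (v # vs) x)) (at 0)"
    by simp
next
  fix vs x and xs :: "nat \<Rightarrow> 'a" and vss :: "nat \<Rightarrow> 'a list"
  assume "\<forall>k. length (vss k) = length vs" "xs \<longlonglongrightarrow> x" "\<forall>i<length vs. (\<lambda>k. vss k ! i) \<longlonglongrightarrow> vs ! i"
  then show "(\<lambda>k. (iter_dd F (vss k) (xs k), iter_dd G (vss k) (xs k))) \<longlonglongrightarrow> (iter_dd F vs x, iter_dd G vs x)"
    by (intro tendsto_Pair smooth_S2[OF F] smooth_S2[OF G])
qed

lemma related_linear:
  assumes B: "linear B"
  shows "related B F G \<longleftrightarrow> (\<forall>y. B (F y) = G (B y))"
proof -
  have eq: "\<forall>\<^sub>F t in at (0::real). (B (y + t *\<^sub>R F y) - B y) /\<^sub>R t = B (F y)" for y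
    by (auto simp: eventually_at_filter linear_add[OF B] linear_scale[OF B])
  have "((\<lambda>t::real. (B (y + t *\<^sub>R F y) - B y) /\<^sub>R t) \<longlongrightarrow> G (B y)) (at 0) \<longleftrightarrow> ((\<lambda>t::real. B (F y)) \<longlongrightarrow> G (B y)) (at 0)" for y
    by (rule tendsto_cong[OF eq])
  also have "\<dots> y \<longleftrightarrow> B (F y) = G (B y)" for y
    by (rule tendsto_const_iff) simp
  finally show ?thesis unfolding related_def by simp
qed

definition Gam :: "('a::banach \<Rightarrow> 'a) \<Rightarrow> real \<times> ('a \<times> 'a) \<Rightarrow> 'a \<times> 'a" where
  "Gam f p = (f (fst (snd p)), Qf f p)"

lemma smooth_Gam:
  fixes f :: "'a::banach \<Rightarrow> 'a"
  assumes f: "smooth f" shows "smooth (Gam f)"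
proof -
  have "smooth (\<lambda>p::real \<times> ('a \<times> 'a). f (fst (snd p)))"
    by (rule smooth_affine[OF f, where L = "\<lambda>p. fst (snd p)"])
       (auto intro: bounded_linear_compose[OF bounded_linear_fst bounded_linear_snd])
  then show ?thesis unfolding Gam_def[abs_def] by (rule smooth_pair[OF _ smooth_Q[OF f]])
qed

lemma evalE_Es0: "evalE f (Es 0) s x [] = gderiv f (zpt s x) (snd (snd x))"
  by (simp add: evalE_def evalT_def)

lemma Q0: "Qf f (0, (y, \<eta>)) = gderiv f y \<eta>"
  unfolding Qf_def evalE_Es0 by (simp add: zpt_def)

lemma Qh:
  fixes f :: "'a::banach \<Rightarrow> 'a"
  assumes f: "smooth f" and h: "h \<noteq> 0"
  shows "Qf f (h, (y, \<eta>)) = (f (y + h *\<^sub>R \<eta>) - f y) /\<^sub>R h"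
proof -
  let ?G = "\<lambda>s. gderiv f (y + (s * h) *\<^sub>R \<eta>) \<eta>"
  have vd: "((\<lambda>s. f (y + (s * h) *\<^sub>R \<eta>)) has_vector_derivative h *\<^sub>R ?G s) (at s within {0..1})" for s
  proof -
    have e1: "y + ((s + \<tau>) * h) *\<^sub>R \<eta> = y + (s * h) *\<^sub>R \<eta> + \<tau> *\<^sub>R (h *\<^sub>R \<eta>)" for \<tau>
      by (simp add: distrib_right scaleR_add_left add.assoc)
    have e2: "gderiv f (y + (s * h) *\<^sub>R \<eta>) (h *\<^sub>R \<eta>) = h *\<^sub>R ?G s" by (rule gderiv_scale[OF f])
    have "((\<lambda>\<tau>. (f (y + ((s + \<tau>) * h) *\<^sub>R \<eta>) - f (y + (s * h) *\<^sub>R \<eta>)) /\<^sub>R \<tau>) \<longlongrightarrow> h *\<^sub>R ?G s) (at 0)"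
      unfolding e1 e2[symmetric] by (rule smooth_S1_0[OF f])
    then have "((\<lambda>s. f (y + (s * h) *\<^sub>R \<eta>)) has_vector_derivative h *\<^sub>R ?G s) (at s)"
      using vd_from_quot[of "\<lambda>s. f (y + (s * h) *\<^sub>R \<eta>)" s "h *\<^sub>R ?G s"] by simp
    then show ?thesis by (rule has_vector_derivative_at_within)
  qed
  have "((\<lambda>s. h *\<^sub>R ?G s) has_integral (f (y + (1 * h) *\<^sub>R \<eta>) - f (y + (0 * h) *\<^sub>R \<eta>))) {0..1}"
    by (rule fundamental_theorem_of_calculus) (use vd in auto)
  then have hi: "((\<lambda>s. h *\<^sub>R ?G s) has_integral (f (y + h *\<^sub>R \<eta>) - f y)) {0..1}" by simp
  have "integral {0..1} (\<lambda>s. h *\<^sub>R ?G s) = f (y + h *\<^sub>R \<eta>) - f y"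
    by (rule integral_unique[OF hi])
  then have "h *\<^sub>R integral {0..1} ?G = f (y + h *\<^sub>R \<eta>) - f y" by simp
  then have "integral {0..1} ?G = (f (y + h *\<^sub>R \<eta>) - f y) /\<^sub>R h"
  proof -
    assume e: "h *\<^sub>R integral {0..1} ?G = f (y + h *\<^sub>R \<eta>) - f y"
    have "integral {0..1} ?G = (1/h) *\<^sub>R (h *\<^sub>R integral {0..1} ?G)" using h by simp
    then show ?thesis unfolding e by (simp add: inverse_eq_divide)
  qed
  then show ?thesis unfolding Qf_def evalE_Es0 by (simp add: zpt_def)
qed

theorem theorem2p13:
  fixes phi1 :: "('a::banach \<Rightarrow> 'a) \<Rightarrow> ('a \<Rightarrow> 'a)"
    and phi2 :: "('a \<times> 'a \<Rightarrow> 'a \<times> 'a) \<Rightarrow> ('a \<times> 'a \<Rightarrow> 'a \<times> 'a)"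
    and f :: "'a \<Rightarrow> 'a"
  assumes "integrator_component phi1"
    and "integrator_component phi2"
    and "affine_equivariant_pair phi1 phi1"
    and "affine_equivariant_pair phi1 phi2"
    and "affine_equivariant_pair phi2 phi1"
    and "affine_equivariant_pair phi2 phi2"
    and "f \<in> vector_fields"
  shows "phi2 (tangent_lift f) = tangent_lift (phi1 f)"
proof -
  have sf: "smooth f" using assms(7) by (simp add: vector_fields_def)
  have sphi: "smooth (phi1 f)" using assms(1) assms(7) by (simp add: integrator_component_def vector_fields_def)
  define c where "c = (\<lambda>h p. Gam f (h, p))"
  have sc: "smooth (\<lambda>p. c (fst p) (snd p))" using smooth_Gam[OF sf] by (simp add: c_def)
  have sout: "smooth (\<lambda>p. phi2 (c (fst p)) (snd p))"
    using assms(2) sc unfolding integrator_component_def by blast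
  have c0: "c 0 = tangent_lift f" by (auto simp: c_def Gam_def tangent_lift_def Q0 fun_eq_iff)
  have ch: "c h (y, \<eta>) = (f y, (f (y + h *\<^sub>R \<eta>) - f y) /\<^sub>R h)" if "h \<noteq> 0" for h y \<eta>
    by (simp add: c_def Gam_def Qh[OF sf that])
  have cvf: "c h \<in> vector_fields" for h
  proof -
    have "smooth (\<lambda>p::'a \<times> 'a. Gam f (h, p))"
      by (rule smooth_affine[OF smooth_Gam[OF sf], where L = "\<lambda>p. (0, p)"])
         (auto intro: bounded_linear_Pair bounded_linear_zero bounded_linear_ident)
    then show ?thesis by (simp add: c_def vector_fields_def)
  qed
  have phic: "phi2 (c h) (y, \<eta>) = (phi1 f y, (phi1 f (y + h *\<^sub>R \<eta>) - phi1 f y) /\<^sub>R h)" if h: "h \<noteq> 0" for h y \<eta>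
  proof -
    let ?B = "\<lambda>p::'a \<times> 'a. fst p + h *\<^sub>R snd p"
    have blB: "bounded_linear ?B"
      by (intro bounded_linear_add bounded_linear_fst bounded_linear_compose[OF bounded_linear_scaleR_right bounded_linear_snd])
    then have lB: "linear ?B" by (rule bounded_linear.linear)
    have aB: "affine_map ?B" unfolding affine_map_def by (intro exI[of _ ?B] exI[of _ 0]) (simp add: blB)
    have "related ?B (c h) f"
      unfolding related_linear[OF lB]
    proof
      fix p :: "'a \<times> 'a"
      obtain y \<eta> where p: "p = (y, \<eta>)" by (cases p)
      show "?B (c h p) = f (?B p)" using h by (simp add: p ch)
    qed
    then have "related ?B (phi2 (c h)) (phi1 f)"
      using assms(5) aB cvf assms(7) unfolding affine_equivariant_pair_def by blast
    then have r1: "?B (phi2 (c h) (y, \<eta>)) = phi1 f (y + h *\<^sub>R \<eta>)"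
      unfolding related_linear[OF lB] by simp
    have lf: "linear (fst :: 'a \<times> 'a \<Rightarrow> 'a)" by (rule bounded_linear.linear[OF bounded_linear_fst])
    have af: "affine_map (fst :: 'a \<times> 'a \<Rightarrow> 'a)"
      unfolding affine_map_def by (intro exI[of _ fst] exI[of _ 0]) (simp add: bounded_linear_fst)
    have "related fst (c h) f"
      unfolding related_linear[OF lf] by (simp add: c_def Gam_def)
    then have "related fst (phi2 (c h)) (phi1 f)"
      using assms(5) af cvf assms(7) unfolding affine_equivariant_pair_def by blast
    then have r2: "fst (phi2 (c h) (y, \<eta>)) = phi1 f y"
      unfolding related_linear[OF lf] by simp
    have "snd (phi2 (c h) (y, \<eta>)) = (phi1 f (y + h *\<^sub>R \<eta>) - phi1 f y) /\<^sub>R h"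
    proof -
      have e: "h *\<^sub>R snd (phi2 (c h) (y, \<eta>)) = phi1 f (y + h *\<^sub>R \<eta>) - phi1 f y"
        using r1 r2 by (simp add: eq_diff_eq add.commute)
      have "snd (phi2 (c h) (y, \<eta>)) = inverse h *\<^sub>R (h *\<^sub>R snd (phi2 (c h) (y, \<eta>)))"
        using h by simp
      then show ?thesis unfolding e by simp
    qed
    with r2 show ?thesis by (metis prod.collapse)
  qed
  show ?thesis
  proof
    fix p :: "'a \<times> 'a"
    obtain y \<eta> where p: "p = (y, \<eta>)" by (cases p)
    define t where "t = (\<lambda>k::nat. inverse (real (Suc k)))"
    have t0: "t \<longlonglongrightarrow> 0" unfolding t_def by (rule LIMSEQ_inverse_real_of_nat)
    have tnz: "t k \<noteq> 0" for k by (simp add: t_def)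
    have "(\<lambda>k. iter_dd (\<lambda>p. phi2 (c (fst p)) (snd p)) [] ((\<lambda>k. (t k, (y, \<eta>))) k)) \<longlonglongrightarrow> iter_dd (\<lambda>p. phi2 (c (fst p)) (snd p)) [] (0, (y, \<eta>))"
      by (rule smooth_S2[OF sout]) (auto intro!: tendsto_intros t0)
    then have L1: "(\<lambda>k. phi2 (c (t k)) (y, \<eta>)) \<longlonglongrightarrow> phi2 (tangent_lift f) (y, \<eta>)"
      by (simp add: c0)
    have ft: "filterlim t (at 0) sequentially"
      unfolding filterlim_at using t0 tnz by auto
    have "((\<lambda>k. (phi1 f (y + t k *\<^sub>R \<eta>) - phi1 f y) /\<^sub>R t k) \<longlongrightarrow> gderiv (phi1 f) y \<eta>) sequentially"
      by (rule filterlim_compose[OF smooth_S1_0[OF sphi] ft])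
    then have "(\<lambda>k. (phi1 f y, (phi1 f (y + t k *\<^sub>R \<eta>) - phi1 f y) /\<^sub>R t k)) \<longlonglongrightarrow> (phi1 f y, gderiv (phi1 f) y \<eta>)"
      by (intro tendsto_Pair tendsto_const)
    then have L2: "(\<lambda>k. phi2 (c (t k)) (y, \<eta>)) \<longlonglongrightarrow> tangent_lift (phi1 f) (y, \<eta>)"
      using phic[OF tnz] by (simp add: tangent_lift_def)
    show "phi2 (tangent_lift f) p = tangent_lift (phi1 f) p"
      unfolding p using LIMSEQ_unique[OF L1 L2] .
  qed
qed

end
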